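(* For any two knots $K_1,K_2\subset S^3$, $\delta(K_1\# K_2)=\delta(K_1)\delta(K_2)$. Furthermore, \[ b_{\mathrm{e}}(K_1\# K_2)=b_{\mathrm{e}}(K_1)+b_{\mathrm{e}}(K_2)+\tfrac14(\delta(K_1)-1)(\delta(K_2)-1),\] \[ b_{\mathrm{o}}(K_1\# K_2)=b_{\mathrm{o}}(K_1)+b_{\mathrm{o}}(K_2)+\tfrac14(\delta(K_1)-1)(\delta(K_2)-1).\]
   Context: For a knot $K\subset S^3$, $\widehat{\mathrm{CFK}}(K)$ denotes the (hat) knot Floer chain complex with coefficients in $\mathbb{F}_2$: a finite-dimensional, graded, filtered chain complex (differential lowering grading by one, not increasing filtration level), well defined up to filtered chain homotopy equivalence; its unfiltered homology is one-dimensional, in grading $0$, and $\widehat{\mathrm{CFK}}(K_1\# K_2)\simeq \widehat{\mathrm{CFK}}(K_1)\otimes\widehat{\mathrm{CFK}}(K_2)$. A bar $(T\to B)$ is a two-dimensional complex with homogeneous basis $T,B$, $\partial T=B$, and filtration level of $B$ strictly less than that of $T$; it is even or odd according as the grading of $B$ is even or odd. A bar-complex is a complex together with a direct sum decomposition into one-dimensional complexes and bars. Every finite-dimensional graded filtered complex over $\mathbb{F}_2$ is filtered chain homotopy equivalent to a bar-complex, which is unique up to isomorphism. Let $\widehat{C}(K)$ be the bar-complex representative of $\widehat{\mathrm{CFK}}(K)$. Define $\delta(K)=\dim\widehat{C}(K)$ (equal to the total dimension of knot Floer homology $\widehat{\mathrm{HFK}}(K)$), and let $b_{\mathrm{e}}(K)$,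 $b_{\mathrm{o}}(K)$ be the numbers of even and odd bars in $\widehat{C}(K)$; thus $\delta(K)=1+2(b_{\mathrm{e}}(K)+b_{\mathrm{o}}(K))$. *)

theory Defs
  imports Main "HOL-Library.Z2"
begin

text \<open>A finite-dimensional graded filtered chain complex over F2, presented by a
homogeneous filtered basis e_0,...,e_(dim-1): basis element e_i has grading gr i and
filtration level fl i; dd i j is the coefficient of e_i in the differential of e_j.\<close>

record cx =
  dim :: nat
  gr :: "nat \<Rightarrow> int"
  fl :: "nat \<Rightarrow> int"
  dd :: "nat \<Rightarrow> nat \<Rightarrow> bit"

type_synonym mat = "nat \<Rightarrow> nat \<Rightarrow> bit"

definition mmul :: "nat \<Rightarrow> mat \<Rightarrow> mat \<Rightarrow> mat" where
  "mmul m A B = (\<lambda>i k. \<Sum>j<m. A i j * B j k)"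

definition idm :: "nat \<Rightarrow> mat" where
  "idm n = (\<lambda>i j. if i = j \<and> i < n then 1 else 0)"

definition app :: "nat \<Rightarrow> mat \<Rightarrow> (nat \<Rightarrow> bit) \<Rightarrow> (nat \<Rightarrow> bit)" where
  "app m A v = (\<lambda>i. \<Sum>j<m. A i j * v j)"

definition is_cx :: "cx \<Rightarrow> bool" where
  "is_cx C \<longleftrightarrow>
     (\<forall>i j. dd C i j \<noteq> 0 \<longrightarrow> i < dim C \<and> j < dim C \<and> gr C i + 1 = gr C j \<and> fl C i \<le> fl C j)
   \<and> mmul (dim C) (dd C) (dd C) = (\<lambda>i k. 0)"

definition filt_chain_map :: "cx \<Rightarrow> cx \<Rightarrow> mat \<Rightarrow> bool" where
  "filt_chain_map C C' F \<longleftrightarrow>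
     (\<forall>i j. F i j \<noteq> 0 \<longrightarrow> i < dim C' \<and> j < dim C \<and> gr C' i = gr C j \<and> fl C' i \<le> fl C j)
   \<and> mmul (dim C') (dd C') F = mmul (dim C) F (dd C)"

definition filt_htpy :: "cx \<Rightarrow> mat \<Rightarrow> bool" where
  "filt_htpy C H \<longleftrightarrow>
     (\<forall>i j. H i j \<noteq> 0 \<longrightarrow> i < dim C \<and> j < dim C \<and> gr C i = gr C j + 1 \<and> fl C i \<le> fl C j)"

text \<open>G \<circ> F is filtered chain homotopic to the identity of C via H (characteristic 2).\<close>
definition htpy_id :: "cx \<Rightarrow> mat \<Rightarrow> mat \<Rightarrow> bool" where
  "htpy_id C GF H \<longleftrightarrow> filt_htpy C H \<and>
     GF = (\<lambda>i j. idm (dim C) i j + mmul (dim C) (dd C) H i j + mmul (dim C) H (dd C) i j)"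

definition fequiv :: "cx \<Rightarrow> cx \<Rightarrow> bool" where
  "fequiv C C' \<longleftrightarrow> (\<exists>F G H H'.
      filt_chain_map C C' F \<and> filt_chain_map C' C G \<and>
      htpy_id C (mmul (dim C') G F) H \<and> htpy_id C' (mmul (dim C) F G) H')"

definition cycles :: "cx \<Rightarrow> int \<Rightarrow> (nat \<Rightarrow> bit) set" where
  "cycles C k = {v. (\<forall>i. v i \<noteq> 0 \<longrightarrow> i < dim C \<and> gr C i = k) \<and> app (dim C) (dd C) v = (\<lambda>i. 0)}"

definition boundaries :: "cx \<Rightarrow> int \<Rightarrow> (nat \<Rightarrow> bit) set" where
  "boundaries C k = {app (dim C) (dd C) w | w. \<forall>i. w i \<noteq> 0 \<longrightarrow> i < dim C \<and> gr C i = k + 1}"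

definition homology :: "cx \<Rightarrow> int \<Rightarrow> (nat \<Rightarrow> bit) set set" where
  "homology C k = cycles C k // {(x, y). x \<in> cycles C k \<and> y \<in> cycles C k \<and> x - y \<in> boundaries C k}"

text \<open>Homology is one-dimensional over F2 and concentrated in grading 0
(an F2-space is one-dimensional iff it has exactly 2 elements, zero iff 1 element).\<close>
definition hom_one_in_zero :: "cx \<Rightarrow> bool" where
  "hom_one_in_zero C \<longleftrightarrow> card (homology C 0) = 2 \<and> (\<forall>k. k \<noteq> 0 \<longrightarrow> card (homology C k) = 1)"

text \<open>Tensor product: basis e_a \<otimes> e_b is indexed by a * dim C2 + b.\<close>
definition tensor :: "cx \<Rightarrow> cx \<Rightarrow> cx" where
  "tensor C1 C2 = (let n2 = dim C2; n = dim C1 * n2 in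
     \<lparr> dim = n,
       gr = (\<lambda>p. gr C1 (p div n2) + gr C2 (p mod n2)),
       fl = (\<lambda>p. fl C1 (p div n2) + fl C2 (p mod n2)),
       dd = (\<lambda>p q. if p < n \<and> q < n then
               (if p mod n2 = q mod n2 then dd C1 (p div n2) (q div n2) else 0)
             + (if p div n2 = q div n2 then dd C2 (p mod n2) (q mod n2) else 0)
             else 0) \<rparr>)"

text \<open>Bar-complex: the basis gives the direct sum decomposition; each basis vector is
hit by / maps to at most one basis vector, and every nonzero entry (a bar T \<rightarrow> B)
strictly drops the filtration level.\<close>
definition is_bar_cx :: "cx \<Rightarrow> bool" where
  "is_bar_cx B \<longleftrightarrow> is_cx B
     \<and> (\<forall>j. card {i. dd B i j \<noteq> 0} \<le> 1)
     \<and> (\<forall>i. card {j. dd B i j \<noteq> 0} \<le> 1)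
     \<and> (\<forall>i j. dd B i j \<noteq> 0 \<longrightarrow> fl B i < fl B j)"

definition bar_rep :: "cx \<Rightarrow> cx \<Rightarrow> bool" where
  "bar_rep B C \<longleftrightarrow> is_bar_cx B \<and> fequiv C B"

text \<open>Even / odd bars: bars (T \<rightarrow> B) whose bottom B has even / odd grading.\<close>
definition even_bars :: "cx \<Rightarrow> nat" where
  "even_bars B = card {(i, j). dd B i j \<noteq> 0 \<and> even (gr B i)}"

definition odd_bars :: "cx \<Rightarrow> nat" where
  "odd_bars B = card {(i, j). dd B i j \<noteq> 0 \<and> odd (gr B i)}"

end

theory Submission
  imports Defs
begin
declare add_bit_eq_xor[simp del] mult_bit_eq_and[simp del]
declare bit_not_zero_iff[simp del] bit_not_one_iff[simp del]

lemma bit_add_self[simp]: "(x::bit) + x = 0"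
  by (cases x) (simp_all add: add_bit_eq_xor)

lemma bit_mult_ne0: "(a::bit) * b \<noteq> 0 \<longleftrightarrow> a \<noteq> 0 \<and> b \<noteq> 0"
  by (metis mult_eq_0_iff)

lemma bit_minus_eq_plus: "(a::bit) - b = a + b"
  by (simp only: minus_bit_def)

lemma sum_ne0_ex: "sum f A \<noteq> (0::bit) \<Longrightarrow> \<exists>x\<in>A. f x \<noteq> 0"
  by (metis sum.neutral)

lemma mmul_ne0: "mmul n A B i k \<noteq> 0 \<Longrightarrow> \<exists>j<n. A i j \<noteq> 0 \<and> B j k \<noteq> 0"
  unfolding mmul_def using sum_ne0_ex[of "\<lambda>j. A i j * B j k" "{..<n}"]
  by (auto simp: bit_mult_ne0)

lemma app_ne0: "app n A v i \<noteq> 0 \<Longrightarrow> \<exists>j<n. A i j \<noteq> 0 \<and> v j \<noteq> 0"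
  unfolding app_def using sum_ne0_ex[of "\<lambda>j. A i j * v j" "{..<n}"]
  by (auto simp: bit_mult_ne0)

lemma mmul_assoc: "mmul m (mmul n A B) C = mmul n A (mmul m B C)"
  unfolding mmul_def
  by (auto simp: fun_eq_iff sum_distrib_left sum_distrib_right mult.assoc intro: sum.swap)

lemma mmul_addL: "mmul n (\<lambda>i j. A i j + B i j) C = (\<lambda>i j. mmul n A C i j + mmul n B C i j)"
  unfolding mmul_def by (auto simp: fun_eq_iff distrib_right sum.distrib)

lemma mmul_addR: "mmul n A (\<lambda>i j. B i j + C i j) = (\<lambda>i j. mmul n A B i j + mmul n A C i j)"
  unfolding mmul_def by (auto simp: fun_eq_iff distrib_left sum.distrib)

lemma mmul_idm_left:
  assumes "\<And>i j. A i j \<noteq> 0 \<Longrightarrow> i < n"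
  shows "mmul n (idm n) A = A"
proof (rule ext, rule ext)
  fix i k
  have "mmul n (idm n) A i k = (\<Sum>j<n. if j = i then A i k else 0)"
    unfolding mmul_def idm_def by (intro sum.cong) auto
  also have "\<dots> = A i k" using assms[of i k] by (cases "i < n") auto
  finally show "mmul n (idm n) A i k = A i k" .
qed

lemma mmul_idm_right:
  assumes "\<And>i j. A i j \<noteq> 0 \<Longrightarrow> j < n"
  shows "mmul n A (idm n) = A"
proof (rule ext, rule ext)
  fix i k
  have "mmul n A (idm n) i k = (\<Sum>j<n. if j = k then A i k else 0)"
    unfolding mmul_def idm_def by (intro sum.cong) auto
  also have "\<dots> = A i k" using assms[of i k] by (cases "k < n") auto
  finally show "mmul n A (idm n) i k = A i k" .
qed

lemma app_mmul: "app n (mmul m A B) v = app m A (app n B v)"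
  unfolding mmul_def app_def
  by (auto simp: fun_eq_iff sum_distrib_left sum_distrib_right mult.assoc intro: sum.swap)

lemma app_addM: "app n (\<lambda>i j. A i j + B i j) v = (\<lambda>i. app n A v i + app n B v i)"
  unfolding app_def by (auto simp: fun_eq_iff distrib_right sum.distrib)

lemma app_addV: "app n A (\<lambda>i. v i + w i) = (\<lambda>i. app n A v i + app n A w i)"
  unfolding app_def by (auto simp: fun_eq_iff distrib_left sum.distrib)

lemma app_zero: "app n A (\<lambda>i. 0) = (\<lambda>i. 0)"
  unfolding app_def by auto

lemma app_idm:
  assumes "\<And>i. v i \<noteq> 0 \<Longrightarrow> i < n"
  shows "app n (idm n) v = v"
proof (rule ext)
  fix i
  have "app n (idm n) v i = (\<Sum>j<n. if j = i then v i else 0)"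
    unfolding app_def idm_def by (intro sum.cong) auto
  also have "\<dots> = v i" using assms[of i] by (cases "i < n") auto
  finally show "app n (idm n) v i = v i" .
qed

lemma fequiv_sym: "fequiv C C' \<Longrightarrow> fequiv C' C"
  unfolding fequiv_def by blast

lemma fcm_ne0:
  assumes "filt_chain_map C C' F" "F i j \<noteq> 0"
  shows "i < dim C' \<and> j < dim C \<and> gr C' i = gr C j \<and> fl C' i \<le> fl C j"
  using assms unfolding filt_chain_map_def by blast

lemma fcm_comm:
  assumes "filt_chain_map C C' F"
  shows "mmul (dim C') (dd C') F = mmul (dim C) F (dd C)"
  using assms unfolding filt_chain_map_def by blast

lemma fcm_comp:
  assumes F: "filt_chain_map C C' F" and F': "filt_chain_map C' C'' F'"
  shows "filt_chain_map C C'' (mmul (dim C') F' F)"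
  unfolding filt_chain_map_def
proof (rule conjI, intro allI impI)
  fix i k assume "mmul (dim C') F' F i k \<noteq> 0"
  then obtain j where "F' i j \<noteq> 0" "F j k \<noteq> 0" using mmul_ne0 by blast
  with fcm_ne0[OF F] fcm_ne0[OF F']
  show "i < dim C'' \<and> k < dim C \<and> gr C'' i = gr C k \<and> fl C'' i \<le> fl C k"
    by (metis order_trans)
next
  show "mmul (dim C'') (dd C'') (mmul (dim C') F' F) = mmul (dim C) (mmul (dim C') F' F) (dd C)"
    by (simp add: mmul_assoc[symmetric] fcm_comm[OF F']) (simp add: mmul_assoc fcm_comm[OF F])
qed

lemma bit_id5: "(a::bit) + b + c + x + y = a + (b + x) + (c + y)"
  by (simp add: ac_simps)

lemma fequiv_trans:
  assumes "fequiv C C'" "fequiv C' C''"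
  shows "fequiv C C''"
proof -
  from assms(1) obtain F G H H' where F: "filt_chain_map C C' F" and G: "filt_chain_map C' C G"
    and h1: "htpy_id C (mmul (dim C') G F) H" and h1': "htpy_id C' (mmul (dim C) F G) H'"
    unfolding fequiv_def by blast
  from assms(2) obtain F2 G2 K K' where F2: "filt_chain_map C' C'' F2" and G2: "filt_chain_map C'' C' G2"
    and h2: "htpy_id C' (mmul (dim C'') G2 F2) K" and h2': "htpy_id C'' (mmul (dim C') F2 G2) K'"
    unfolding fequiv_def by blast
  have gen: "htpy_id A (mmul (dim B') (mmul (dim B) P Q) (mmul (dim B) Q' P'))
               (\<lambda>i j. L i j + mmul (dim B) P (mmul (dim B) L' P') i j)"
    if P': "filt_chain_map A B P'" and P: "filt_chain_map B A P"
      and Q': "filt_chain_map B B' Q'" and Q: "filt_chain_map B' B Q"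
      and hL: "htpy_id A (mmul (dim B) P P') L" and hL': "htpy_id B (mmul (dim B') Q Q') L'"
    for A B B' P P' Q Q' L L'
  proof -
    let ?M = "mmul (dim B) L' P'"
    let ?N = "mmul (dim B) P ?M"
    have eL: "mmul (dim B) P P' = (\<lambda>i j. idm (dim A) i j + mmul (dim A) (dd A) L i j + mmul (dim A) L (dd A) i j)"
      using hL unfolding htpy_id_def by blast
    have eL': "mmul (dim B') Q Q' = (\<lambda>i j. idm (dim B) i j + mmul (dim B) (dd B) L' i j + mmul (dim B) L' (dd B) i j)"
      using hL' unfolding htpy_id_def by blast
    have "mmul (dim B') (mmul (dim B) P Q) (mmul (dim B) Q' P') = mmul (dim B) P (mmul (dim B) (mmul (dim B') Q Q') P')"
      by (simp add: mmul_assoc)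
    also have "\<dots> = (\<lambda>i j. mmul (dim B) P (mmul (dim B) (idm (dim B)) P') i j
         + mmul (dim B) P (mmul (dim B) (mmul (dim B) (dd B) L') P') i j
         + mmul (dim B) P (mmul (dim B) (mmul (dim B) L' (dd B)) P') i j)"
      by (simp only: eL' mmul_addL mmul_addR)
    also have "mmul (dim B) (idm (dim B)) P' = P'"
      by (rule mmul_idm_left) (use fcm_ne0[OF P'] in blast)
    also have "mmul (dim B) P (mmul (dim B) (mmul (dim B) (dd B) L') P') = mmul (dim A) (dd A) ?N"
      by (simp add: mmul_assoc[symmetric] fcm_comm[OF P, symmetric])
    also have "mmul (dim B) P (mmul (dim B) (mmul (dim B) L' (dd B)) P') = mmul (dim A) ?N (dd A)"
      by (simp add: mmul_assoc fcm_comm[OF P'])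
    finally have e: "mmul (dim B') (mmul (dim B) P Q) (mmul (dim B) Q' P') =
        (\<lambda>i j. idm (dim A) i j + mmul (dim A) (dd A) L i j + mmul (dim A) L (dd A) i j
          + mmul (dim A) (dd A) ?N i j + mmul (dim A) ?N (dd A) i j)"
      by (simp only: eL)
    have ht: "filt_htpy A (\<lambda>i j. L i j + ?N i j)"
      unfolding filt_htpy_def
    proof (intro allI impI)
      fix i j assume "L i j + ?N i j \<noteq> 0"
      then have "L i j \<noteq> 0 \<or> ?N i j \<noteq> 0" by auto
      then show "i < dim A \<and> j < dim A \<and> gr A i = gr A j + 1 \<and> fl A i \<le> fl A j"
      proof
        assume "L i j \<noteq> 0" then show ?thesis using hL unfolding htpy_id_def filt_htpy_def by blast
      next
        assume "?N i j \<noteq> 0"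
        then obtain a where a: "P i a \<noteq> 0" "?M a j \<noteq> 0" using mmul_ne0 by blast
        then obtain b where b: "L' a b \<noteq> 0" "P' b j \<noteq> 0" using mmul_ne0 by blast
        have "a < dim B \<and> b < dim B \<and> gr B a = gr B b + 1 \<and> fl B a \<le> fl B b"
          using hL' b(1) unfolding htpy_id_def filt_htpy_def by blast
        with fcm_ne0[OF P a(1)] fcm_ne0[OF P' b(2)] show ?thesis by auto
      qed
    qed
    show ?thesis unfolding htpy_id_def
      by (rule conjI[OF ht]) (simp add: e mmul_addL mmul_addR bit_id5)
  qed
  show ?thesis unfolding fequiv_def
    apply (rule exI[of _ "mmul (dim C') F2 F"], rule exI[of _ "mmul (dim C') G G2"])
    apply (rule exI[of _ "\<lambda>i j. H i j + mmul (dim C') G (mmul (dim C') K F) i j"])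
    apply (rule exI[of _ "\<lambda>i j. K' i j + mmul (dim C') F2 (mmul (dim C') H' G2) i j"])
    using fcm_comp[OF F F2] fcm_comp[OF G2 G] gen[OF F G F2 G2 h1 h2] gen[OF G2 F2 G F h2' h1']
    by auto
qed

lemma sum_divmod:
  fixes m k :: nat
  shows "(\<Sum>s<m*k. g (s div k) (s mod k)) = (\<Sum>a<m. \<Sum>b<k. g a b)"
proof (induction m)
  case 0 then show ?case by simp
next
  case (Suc m)
  show ?case
  proof (cases "k = 0")
    case True then show ?thesis by simp
  next
    case False
    have "(\<Sum>s<Suc m*k. g (s div k) (s mod k)) =
          (\<Sum>s\<in>{0..<m*k}. g (s div k) (s mod k)) + (\<Sum>s\<in>{m*k..<m*k+k}. g (s div k) (s mod k))"
      by (simp add: lessThan_atLeast0 sum.atLeastLessThan_concat add.commute)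
    also have "(\<Sum>s\<in>{m*k..<m*k+k}. g (s div k) (s mod k)) = (\<Sum>b\<in>{0..<k}. g ((b + m*k) div k) ((b+m*k) mod k))"
      using sum.shift_bounds_nat_ivl[of "\<lambda>s. g (s div k) (s mod k)" 0 "m*k" k]
      by (simp add: add.commute)
    also have "\<dots> = (\<Sum>b<k. g m b)"
      using False by (intro sum.cong) (auto simp: lessThan_atLeast0)
    finally show ?thesis using Suc by (simp add: lessThan_atLeast0)
  qed
qed

definition kron :: "nat \<Rightarrow> nat \<Rightarrow> nat \<Rightarrow> nat \<Rightarrow> mat \<Rightarrow> mat \<Rightarrow> mat" where
  "kron rb cb rn cn A B = (\<lambda>p q. if p < rb \<and> q < cb then A (p div rn) (q div cn) * B (p mod rn) (q mod cn) else 0)"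

lemma kron_mult:
  fixes m k :: nat
  shows "mmul (m*k) (kron r (m*k) rn k A B) (kron (m*k) c k cn A' B') = kron r c rn cn (mmul m A A') (mmul k B B')"
proof (rule ext, rule ext)
  fix p q
  show "mmul (m*k) (kron r (m*k) rn k A B) (kron (m*k) c k cn A' B') p q = kron r c rn cn (mmul m A A') (mmul k B B') p q"
  proof (cases "p < r \<and> q < c")
    case True
    have "mmul (m*k) (kron r (m*k) rn k A B) (kron (m*k) c k cn A' B') p q
        = (\<Sum>s<m*k. (\<lambda>a b. (A (p div rn) a * A' a (q div cn)) * (B (p mod rn) b * B' b (q mod cn))) (s div k) (s mod k))"
      unfolding mmul_def kron_def using True by (intro sum.cong) (auto simp: ac_simps)
    also have "\<dots> = (\<Sum>a<m. \<Sum>b<k. (A (p div rn) a * A' a (q div cn)) * (B (p mod rn) b * B' b (q mod cn)))"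
      by (rule sum_divmod)
    also have "\<dots> = kron r c rn cn (mmul m A A') (mmul k B B') p q"
      unfolding kron_def mmul_def using True by (simp add: sum_product)
    finally show ?thesis .
  next
    case False
    then show ?thesis unfolding kron_def mmul_def by auto
  qed
qed

lemma kron_addL: "kron rb cb rn cn (\<lambda>i j. A i j + A' i j) B = (\<lambda>p q. kron rb cb rn cn A B p q + kron rb cb rn cn A' B p q)"
  unfolding kron_def by (auto simp: fun_eq_iff distrib_right)

lemma kron_addR: "kron rb cb rn cn A (\<lambda>i j. B i j + B' i j) = (\<lambda>p q. kron rb cb rn cn A B p q + kron rb cb rn cn A B' p q)"
  unfolding kron_def by (auto simp: fun_eq_iff distrib_left)

lemma div_mod_lt:
  fixes p m k :: nat
  assumes "p < m * k"
  shows "p div k < m" "p mod k < k"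
proof -
  show "p div k < m" using assms by (simp add: less_mult_imp_div_less)
  have "k > 0" using assms by (cases k) auto
  then show "p mod k < k" by simp
qed

lemma kron_ne0:
  assumes "kron rb cb rn cn A B p q \<noteq> 0"
  shows "p < rb \<and> q < cb \<and> A (p div rn) (q div cn) \<noteq> 0 \<and> B (p mod rn) (q mod cn) \<noteq> 0"
  using assms unfolding kron_def by (auto split: if_splits simp: bit_mult_ne0)

lemma idm_ne0: "idm n i j \<noteq> 0 \<Longrightarrow> i = j \<and> i < n"
  unfolding idm_def by (auto split: if_splits)

lemma kron_idm:
  fixes m k :: nat
  assumes "n = m * k"
  shows "kron n n k k (idm m) (idm k) = idm n"
proof (rule ext, rule ext)
  fix p q
  show "kron n n k k (idm m) (idm k) p q = idm n p q"
  proof (cases "p < n \<and> q < n")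
    case True
    then have lt: "p div k < m" "p mod k < k" "q div k < m" "q mod k < k"
      using div_mod_lt assms by auto
    have "(p div k = q div k \<and> p mod k = q mod k) \<longleftrightarrow> p = q"
      by (metis div_mult_mod_eq)
    then show ?thesis using True lt unfolding kron_def idm_def by auto
  next
    case False then show ?thesis unfolding kron_def idm_def by auto
  qed
qed

lemma tensor_simps:
  "dim (tensor C1 C2) = dim C1 * dim C2"
  "gr (tensor C1 C2) = (\<lambda>p. gr C1 (p div dim C2) + gr C2 (p mod dim C2))"
  "fl (tensor C1 C2) = (\<lambda>p. fl C1 (p div dim C2) + fl C2 (p mod dim C2))"
  unfolding tensor_def Let_def by simp_all

lemma tensor_dd:
  "dd (tensor C1 C2) = (\<lambda>p q. kron (dim C1 * dim C2) (dim C1 * dim C2) (dim C2) (dim C2) (dd C1) (idm (dim C2)) p q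
        + kron (dim C1 * dim C2) (dim C1 * dim C2) (dim C2) (dim C2) (idm (dim C1)) (dd C2) p q)"
proof (rule ext, rule ext)
  fix p q
  show "dd (tensor C1 C2) p q = kron (dim C1 * dim C2) (dim C1 * dim C2) (dim C2) (dim C2) (dd C1) (idm (dim C2)) p q
        + kron (dim C1 * dim C2) (dim C1 * dim C2) (dim C2) (dim C2) (idm (dim C1)) (dd C2) p q"
  proof (cases "p < dim C1 * dim C2 \<and> q < dim C1 * dim C2")
    case True
    then have lt: "p div dim C2 < dim C1" "p mod dim C2 < dim C2" "q div dim C2 < dim C1" "q mod dim C2 < dim C2"
      using div_mod_lt by auto
    then show ?thesis using True unfolding kron_def idm_def tensor_def Let_def by auto
  next
    case False then show ?thesis unfolding kron_def idm_def tensor_def Let_def by auto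
  qed
qed

lemma is_cx_bounds: "is_cx C \<Longrightarrow> dd C i j \<noteq> 0 \<Longrightarrow> i < dim C \<and> j < dim C"
  unfolding is_cx_def by blast

lemma bit_id_t: "(x::bit) + (a + b) + (c + b) = x + a + c"
  by (cases x; cases a; cases b; cases c) (simp_all add: add_bit_eq_xor)

lemma idm_rows: "idm n i j \<noteq> 0 \<Longrightarrow> i < n" and idm_cols: "idm n i j \<noteq> 0 \<Longrightarrow> j < n"
  using idm_ne0 by auto

lemma mmul_idm_idm: "mmul n (idm n) (idm n) = idm n"
  by (rule mmul_idm_left) (rule idm_rows)

lemma tensor_fcm_left:
  assumes F: "filt_chain_map C1 C1' F" and C2: "is_cx C2"
  shows "filt_chain_map (tensor C1 C2) (tensor C1' C2)
           (kron (dim C1' * dim C2) (dim C1 * dim C2) (dim C2) (dim C2) F (idm (dim C2)))"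
  unfolding filt_chain_map_def
proof (rule conjI, intro allI impI)
  fix p q assume "kron (dim C1' * dim C2) (dim C1 * dim C2) (dim C2) (dim C2) F (idm (dim C2)) p q \<noteq> 0"
  from kron_ne0[OF this] have h: "p < dim C1' * dim C2" "q < dim C1 * dim C2"
    "F (p div dim C2) (q div dim C2) \<noteq> 0" "p mod dim C2 = q mod dim C2"
    using idm_ne0 by blast+
  from fcm_ne0[OF F h(3)] h show "p < dim (tensor C1' C2) \<and> q < dim (tensor C1 C2) \<and>
       gr (tensor C1' C2) p = gr (tensor C1 C2) q \<and> fl (tensor C1' C2) p \<le> fl (tensor C1 C2) q"
    by (simp add: tensor_simps)
next
  let ?n2 = "dim C2" and ?m = "dim C1" and ?m' = "dim C1'"
  have d2r: "mmul ?n2 (dd C2) (idm ?n2) = dd C2"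
    by (rule mmul_idm_right) (use is_cx_bounds[OF C2] in blast)
  have d2l: "mmul ?n2 (idm ?n2) (dd C2) = dd C2"
    by (rule mmul_idm_left) (use is_cx_bounds[OF C2] in blast)
  have Fl: "mmul ?m' (idm ?m') F = F"
    by (rule mmul_idm_left) (use fcm_ne0[OF F] in blast)
  have Fr: "mmul ?m F (idm ?m) = F"
    by (rule mmul_idm_right) (use fcm_ne0[OF F] in blast)
  show "mmul (dim (tensor C1' C2)) (dd (tensor C1' C2)) (kron (?m' * ?n2) (?m * ?n2) ?n2 ?n2 F (idm ?n2)) =
    mmul (dim (tensor C1 C2)) (kron (?m' * ?n2) (?m * ?n2) ?n2 ?n2 F (idm ?n2)) (dd (tensor C1 C2))"
    by (simp only: tensor_simps tensor_dd mmul_addL mmul_addR kron_mult d2r d2l Fl Fr mmul_idm_idm fcm_comm[OF F])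
qed

lemma tensor_htpy_left:
  assumes F: "filt_chain_map C1 C1' F" and G: "filt_chain_map C1' C1 G"
    and h: "htpy_id C1 (mmul (dim C1') G F) H" and C2: "is_cx C2"
  shows "htpy_id (tensor C1 C2)
     (mmul (dim C1' * dim C2) (kron (dim C1 * dim C2) (dim C1' * dim C2) (dim C2) (dim C2) G (idm (dim C2)))
         (kron (dim C1' * dim C2) (dim C1 * dim C2) (dim C2) (dim C2) F (idm (dim C2))))
     (kron (dim C1 * dim C2) (dim C1 * dim C2) (dim C2) (dim C2) H (idm (dim C2)))"
  unfolding htpy_id_def
proof (rule conjI)
  have hH: "filt_htpy C1 H" and eH: "mmul (dim C1') G F = (\<lambda>i j. idm (dim C1) i j + mmul (dim C1) (dd C1) H i j + mmul (dim C1) H (dd C1) i j)"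
    using h unfolding htpy_id_def by blast+
  show "filt_htpy (tensor C1 C2) (kron (dim C1 * dim C2) (dim C1 * dim C2) (dim C2) (dim C2) H (idm (dim C2)))"
    unfolding filt_htpy_def
  proof (intro allI impI)
    fix p q assume "kron (dim C1 * dim C2) (dim C1 * dim C2) (dim C2) (dim C2) H (idm (dim C2)) p q \<noteq> 0"
    from kron_ne0[OF this] have hh: "p < dim C1 * dim C2" "q < dim C1 * dim C2"
      "H (p div dim C2) (q div dim C2) \<noteq> 0" "p mod dim C2 = q mod dim C2"
      using idm_ne0 by blast+
    with hH show "p < dim (tensor C1 C2) \<and> q < dim (tensor C1 C2) \<and>
       gr (tensor C1 C2) p = gr (tensor C1 C2) q + 1 \<and> fl (tensor C1 C2) p \<le> fl (tensor C1 C2) q"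
      unfolding filt_htpy_def by (auto simp: tensor_simps)
  qed
  let ?n2 = "dim C2" and ?m = "dim C1" and ?m' = "dim C1'"
  have d2r: "mmul ?n2 (dd C2) (idm ?n2) = dd C2"
    by (rule mmul_idm_right) (use is_cx_bounds[OF C2] in blast)
  have d2l: "mmul ?n2 (idm ?n2) (dd C2) = dd C2"
    by (rule mmul_idm_left) (use is_cx_bounds[OF C2] in blast)
  have Hl: "mmul ?m (idm ?m) H = H"
    by (rule mmul_idm_left) (use hH in \<open>auto simp: filt_htpy_def\<close>)
  have Hr: "mmul ?m H (idm ?m) = H"
    by (rule mmul_idm_right) (use hH in \<open>auto simp: filt_htpy_def\<close>)
  have ki: "kron (?m * ?n2) (?m * ?n2) ?n2 ?n2 (idm ?m) (idm ?n2) = idm (?m * ?n2)"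
    by (rule kron_idm) simp
  show "mmul (?m' * ?n2) (kron (?m * ?n2) (?m' * ?n2) ?n2 ?n2 G (idm ?n2)) (kron (?m' * ?n2) (?m * ?n2) ?n2 ?n2 F (idm ?n2)) =
    (\<lambda>i j. idm (dim (tensor C1 C2)) i j +
           mmul (dim (tensor C1 C2)) (dd (tensor C1 C2)) (kron (?m * ?n2) (?m * ?n2) ?n2 ?n2 H (idm ?n2)) i j +
           mmul (dim (tensor C1 C2)) (kron (?m * ?n2) (?m * ?n2) ?n2 ?n2 H (idm ?n2)) (dd (tensor C1 C2)) i j)"
    by (simp only: tensor_simps tensor_dd mmul_addL mmul_addR kron_mult d2r d2l Hl Hr mmul_idm_idm eH kron_addL ki bit_id_t)
qed

lemma tensor_fequiv_left:
  assumes "fequiv C1 C1'" "is_cx C2"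
  shows "fequiv (tensor C1 C2) (tensor C1' C2)"
proof -
  from assms(1) obtain F G H H' where F: "filt_chain_map C1 C1' F" and G: "filt_chain_map C1' C1 G"
    and h1: "htpy_id C1 (mmul (dim C1') G F) H" and h1': "htpy_id C1' (mmul (dim C1) F G) H'"
    unfolding fequiv_def by blast
  show ?thesis unfolding fequiv_def
    using tensor_fcm_left[OF F assms(2)] tensor_fcm_left[OF G assms(2)]
      tensor_htpy_left[OF F G h1 assms(2)] tensor_htpy_left[OF G F h1' assms(2)]
    by (auto simp only: tensor_simps)
qed

lemma bit_id_t2: "(x::bit) + (b + a) + (b + c) = x + a + c"
  by (cases x; cases a; cases b; cases c) (simp_all add: add_bit_eq_xor)

lemma tensor_fcm_right:
  assumes F: "filt_chain_map C2 C2' F" and C1: "is_cx C1"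
  shows "filt_chain_map (tensor C1 C2) (tensor C1 C2')
           (kron (dim C1 * dim C2') (dim C1 * dim C2) (dim C2') (dim C2) (idm (dim C1)) F)"
  unfolding filt_chain_map_def
proof (rule conjI, intro allI impI)
  fix p q assume "kron (dim C1 * dim C2') (dim C1 * dim C2) (dim C2') (dim C2) (idm (dim C1)) F p q \<noteq> 0"
  from kron_ne0[OF this] have h: "p < dim C1 * dim C2'" "q < dim C1 * dim C2"
    "F (p mod dim C2') (q mod dim C2) \<noteq> 0" "p div dim C2' = q div dim C2"
    using idm_ne0 by blast+
  from fcm_ne0[OF F h(3)] h show "p < dim (tensor C1 C2') \<and> q < dim (tensor C1 C2) \<and>
       gr (tensor C1 C2') p = gr (tensor C1 C2) q \<and> fl (tensor C1 C2') p \<le> fl (tensor C1 C2) q"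
    by (simp add: tensor_simps)
next
  let ?m = "dim C1" and ?n = "dim C2" and ?n' = "dim C2'"
  have d1r: "mmul ?m (dd C1) (idm ?m) = dd C1"
    by (rule mmul_idm_right) (use is_cx_bounds[OF C1] in blast)
  have d1l: "mmul ?m (idm ?m) (dd C1) = dd C1"
    by (rule mmul_idm_left) (use is_cx_bounds[OF C1] in blast)
  have Fl: "mmul ?n' (idm ?n') F = F"
    by (rule mmul_idm_left) (use fcm_ne0[OF F] in blast)
  have Fr: "mmul ?n F (idm ?n) = F"
    by (rule mmul_idm_right) (use fcm_ne0[OF F] in blast)
  show "mmul (dim (tensor C1 C2')) (dd (tensor C1 C2')) (kron (?m * ?n') (?m * ?n) ?n' ?n (idm ?m) F) =
    mmul (dim (tensor C1 C2)) (kron (?m * ?n') (?m * ?n) ?n' ?n (idm ?m) F) (dd (tensor C1 C2))"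
    by (simp only: tensor_simps tensor_dd mmul_addL mmul_addR kron_mult d1r d1l Fl Fr mmul_idm_idm fcm_comm[OF F])
qed

lemma tensor_htpy_right:
  assumes F: "filt_chain_map C2 C2' F" and G: "filt_chain_map C2' C2 G"
    and h: "htpy_id C2 (mmul (dim C2') G F) H" and C1: "is_cx C1"
  shows "htpy_id (tensor C1 C2)
     (mmul (dim C1 * dim C2') (kron (dim C1 * dim C2) (dim C1 * dim C2') (dim C2) (dim C2') (idm (dim C1)) G)
         (kron (dim C1 * dim C2') (dim C1 * dim C2) (dim C2') (dim C2) (idm (dim C1)) F))
     (kron (dim C1 * dim C2) (dim C1 * dim C2) (dim C2) (dim C2) (idm (dim C1)) H)"
  unfolding htpy_id_def
proof (rule conjI)
  have hH: "filt_htpy C2 H" and eH: "mmul (dim C2') G F = (\<lambda>i j. idm (dim C2) i j + mmul (dim C2) (dd C2) H i j + mmul (dim C2) H (dd C2) i j)"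
    using h unfolding htpy_id_def by blast+
  show "filt_htpy (tensor C1 C2) (kron (dim C1 * dim C2) (dim C1 * dim C2) (dim C2) (dim C2) (idm (dim C1)) H)"
    unfolding filt_htpy_def
  proof (intro allI impI)
    fix p q assume "kron (dim C1 * dim C2) (dim C1 * dim C2) (dim C2) (dim C2) (idm (dim C1)) H p q \<noteq> 0"
    from kron_ne0[OF this] have hh: "p < dim C1 * dim C2" "q < dim C1 * dim C2"
      "H (p mod dim C2) (q mod dim C2) \<noteq> 0" "p div dim C2 = q div dim C2"
      using idm_ne0 by blast+
    with hH show "p < dim (tensor C1 C2) \<and> q < dim (tensor C1 C2) \<and>
       gr (tensor C1 C2) p = gr (tensor C1 C2) q + 1 \<and> fl (tensor C1 C2) p \<le> fl (tensor C1 C2) q"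
      unfolding filt_htpy_def by (auto simp: tensor_simps)
  qed
  let ?m = "dim C1" and ?n = "dim C2" and ?n' = "dim C2'"
  have d1r: "mmul ?m (dd C1) (idm ?m) = dd C1"
    by (rule mmul_idm_right) (use is_cx_bounds[OF C1] in blast)
  have d1l: "mmul ?m (idm ?m) (dd C1) = dd C1"
    by (rule mmul_idm_left) (use is_cx_bounds[OF C1] in blast)
  have Hl: "mmul ?n (idm ?n) H = H"
    by (rule mmul_idm_left) (use hH in \<open>auto simp: filt_htpy_def\<close>)
  have Hr: "mmul ?n H (idm ?n) = H"
    by (rule mmul_idm_right) (use hH in \<open>auto simp: filt_htpy_def\<close>)
  have ki: "kron (?m * ?n) (?m * ?n) ?n ?n (idm ?m) (idm ?n) = idm (?m * ?n)"
    by (rule kron_idm) simp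
  show "mmul (?m * ?n') (kron (?m * ?n) (?m * ?n') ?n ?n' (idm ?m) G) (kron (?m * ?n') (?m * ?n) ?n' ?n (idm ?m) F) =
    (\<lambda>i j. idm (dim (tensor C1 C2)) i j +
           mmul (dim (tensor C1 C2)) (dd (tensor C1 C2)) (kron (?m * ?n) (?m * ?n) ?n ?n (idm ?m) H) i j +
           mmul (dim (tensor C1 C2)) (kron (?m * ?n) (?m * ?n) ?n ?n (idm ?m) H) (dd (tensor C1 C2)) i j)"
    by (simp only: tensor_simps tensor_dd mmul_addL mmul_addR kron_mult d1r d1l Hl Hr mmul_idm_idm eH kron_addR ki bit_id_t2)
qed

lemma tensor_fequiv_right:
  assumes "fequiv C2 C2'" "is_cx C1"
  shows "fequiv (tensor C1 C2) (tensor C1 C2')"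
proof -
  from assms(1) obtain F G H H' where F: "filt_chain_map C2 C2' F" and G: "filt_chain_map C2' C2 G"
    and h1: "htpy_id C2 (mmul (dim C2') G F) H" and h1': "htpy_id C2' (mmul (dim C2) F G) H'"
    unfolding fequiv_def by blast
  show ?thesis unfolding fequiv_def
    using tensor_fcm_right[OF F assms(2)] tensor_fcm_right[OF G assms(2)]
      tensor_htpy_right[OF F G h1 assms(2)] tensor_htpy_right[OF G F h1' assms(2)]
    by (auto simp only: tensor_simps)
qed

definition reduced :: "cx \<Rightarrow> bool" where
  "reduced C \<longleftrightarrow> (\<forall>i j. dd C i j \<noteq> 0 \<longrightarrow> fl C i < fl C j)"

lemma bit_eq_from_ne0: "(\<And>i. (u i \<noteq> (0::bit)) = (w i \<noteq> 0)) \<Longrightarrow> u = w"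
  by (rule ext) (metis bit_not_zero_iff)

lemma bit_sum3: "(0::bit) = x + a + b \<Longrightarrow> x \<noteq> 0 \<Longrightarrow> a \<noteq> 0 \<or> b \<noteq> 0"
  by (cases x; cases a; cases b) (simp_all add: add_bit_eq_xor)

lemma bit_add_eq0: "(a::bit) + b = 0 \<Longrightarrow> a = b"
  by (cases a; cases b) (simp_all add: add_bit_eq_xor)

lemma fcm_inj:
  assumes red: "reduced C" and F: "filt_chain_map C C' F" and G: "filt_chain_map C' C G"
    and h: "htpy_id C (mmul (dim C') G F) H"
    and v: "\<And>i. v i \<noteq> 0 \<Longrightarrow> i < dim C" and w: "\<And>i. w i \<noteq> 0 \<Longrightarrow> i < dim C"
    and eq: "app (dim C) F v = app (dim C) F w"
  shows "v = w"
proof -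
  define x where "x = (\<lambda>i. v i + w i)"
  have xs: "i < dim C" if xi: "x i \<noteq> 0" for i
  proof (cases "v i = 0")
    case True
    then have "w i \<noteq> 0" using xi unfolding x_def by simp
    then show ?thesis by (rule w)
  next
    case False
    then show ?thesis by (rule v)
  qed
  have hH: "filt_htpy C H" and eH: "mmul (dim C') G F = (\<lambda>i j. idm (dim C) i j + mmul (dim C) (dd C) H i j + mmul (dim C) H (dd C) i j)"
    using h unfolding htpy_id_def by blast+
  have ai: "app (dim C) (idm (dim C)) x = x" by (rule app_idm) (rule xs)
  have "app (dim C) F x = app (dim C) F (\<lambda>i. v i + w i)" unfolding x_def ..
  also have "\<dots> = (\<lambda>i. app (dim C) F v i + app (dim C) F w i)" by (rule app_addV)
  also have "\<dots> = (\<lambda>i. 0)" unfolding eq by (rule ext) (rule bit_add_self)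
  finally have "app (dim C) F x = (\<lambda>i. 0)" .
  then have "app (dim C') G (app (dim C) F x) = (\<lambda>i. 0)" by (simp only: app_zero)
  then have "app (dim C) (mmul (dim C') G F) x = (\<lambda>i. 0)" by (simp only: app_mmul)
  then have "app (dim C) (\<lambda>i j. idm (dim C) i j + mmul (dim C) (dd C) H i j + mmul (dim C) H (dd C) i j) x = (\<lambda>i. 0)"
    by (simp only: eH)
  then have e0: "(\<lambda>i. x i + app (dim C) (mmul (dim C) (dd C) H) x i + app (dim C) (mmul (dim C) H (dd C)) x i) = (\<lambda>i. 0)"
    by (simp only: app_addM ai)
  have up: "\<exists>k. x k \<noteq> 0 \<and> fl C i < fl C k" if xi: "x i \<noteq> 0" for i
  proof -
    from fun_cong[OF e0, of i] xi have
      "app (dim C) (mmul (dim C) (dd C) H) x i \<noteq> 0 \<or> app (dim C) (mmul (dim C) H (dd C)) x i \<noteq> 0"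
      using bit_sum3 by metis
    then show ?thesis
    proof
      assume "app (dim C) (mmul (dim C) (dd C) H) x i \<noteq> 0"
      then obtain k where k: "mmul (dim C) (dd C) H i k \<noteq> 0" "x k \<noteq> 0" using app_ne0 by blast
      then obtain j where "dd C i j \<noteq> 0" "H j k \<noteq> 0" using mmul_ne0 by blast
      with red hH have "fl C i < fl C k" unfolding reduced_def filt_htpy_def by force
      with k show ?thesis by blast
    next
      assume "app (dim C) (mmul (dim C) H (dd C)) x i \<noteq> 0"
      then obtain k where k: "mmul (dim C) H (dd C) i k \<noteq> 0" "x k \<noteq> 0" using app_ne0 by blast
      then obtain j where "H i j \<noteq> 0" "dd C j k \<noteq> 0" using mmul_ne0 by blast
      with red hH have "fl C i < fl C k" unfolding reduced_def filt_htpy_def by force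
      with k show ?thesis by blast
    qed
  qed
  have "x = (\<lambda>i. 0)"
  proof (rule ccontr)
    assume "x \<noteq> (\<lambda>i. 0)"
    then obtain i0 where "x i0 \<noteq> 0" by auto
    define S where "S = {i. x i \<noteq> 0}"
    have "S \<subseteq> {..<dim C}" using xs unfolding S_def by auto
    then have fS: "finite S" using finite_subset by blast
    have neS: "fl C ` S \<noteq> {}" using \<open>x i0 \<noteq> 0\<close> unfolding S_def by auto
    have "Max (fl C ` S) \<in> fl C ` S" using fS neS by (intro Max_in) auto
    then obtain i where iS: "i \<in> S" and im: "fl C i = Max (fl C ` S)" by auto
    from iS have "x i \<noteq> 0" unfolding S_def by simp
    from up[OF this] obtain k where k: "x k \<noteq> 0" "fl C i < fl C k" by blast
    have "k \<in> S" using k unfolding S_def by simp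
    then have "fl C k \<in> fl C ` S" by (rule imageI)
    then have "fl C k \<le> Max (fl C ` S)" using fS by (intro Max_ge) auto
    then show False using im k by linarith
  qed
  show "v = w"
  proof (rule ext)
    fix i
    have "x i = 0" using fun_cong[OF \<open>x = (\<lambda>i. 0)\<close>, of i] by (simp only:)
    then have "v i + w i = 0" unfolding x_def .
    then show "v i = w i" by (rule bit_add_eq0)
  qed
qed

definition ind :: "nat set \<Rightarrow> nat \<Rightarrow> bit" where
  "ind A = (\<lambda>i. if i \<in> A then 1 else 0)"

lemma ind_ne0: "ind A i \<noteq> 0 \<longleftrightarrow> i \<in> A"
  unfolding ind_def by auto

lemma ind_inj: "ind A = ind B \<Longrightarrow> A = B"
  by (metis ind_ne0 subsetI subset_antisym)

lemma count_le:
  assumes red: "reduced C" and F: "filt_chain_map C C' F" and G: "filt_chain_map C' C G"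
    and h: "htpy_id C (mmul (dim C') G F) H"
  shows "card {i. i < dim C \<and> gr C i = k} \<le> card {i. i < dim C' \<and> gr C' i = k}"
proof -
  define S where "S = {i. i < dim C \<and> gr C i = k}"
  define S' where "S' = {i. i < dim C' \<and> gr C' i = k}"
  define \<Psi> where "\<Psi> = (\<lambda>A. {i. app (dim C) F (ind A) i \<noteq> 0})"
  have fS: "finite S" "finite S'" unfolding S_def S'_def by auto
  have sub: "\<Psi> ` Pow S \<subseteq> Pow S'"
  proof
    fix B assume "B \<in> \<Psi> ` Pow S"
    then obtain A where A: "A \<subseteq> S" "B = \<Psi> A" by auto
    have "B \<subseteq> S'"
    proof
      fix i assume "i \<in> B"
      then have "app (dim C) F (ind A) i \<noteq> 0" using A unfolding \<Psi>_def by auto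
      then obtain j where "F i j \<noteq> 0" "ind A j \<noteq> 0" using app_ne0 by blast
      with fcm_ne0[OF F] A show "i \<in> S'" unfolding S_def S'_def ind_ne0 by auto
    qed
    then show "B \<in> Pow S'" by simp
  qed
  have inj: "inj_on \<Psi> (Pow S)"
  proof
    fix A B assume A: "A \<in> Pow S" and B: "B \<in> Pow S" and e: "\<Psi> A = \<Psi> B"
    have "app (dim C) F (ind A) = app (dim C) F (ind B)"
      by (rule bit_eq_from_ne0) (use e in \<open>auto simp: \<Psi>_def set_eq_iff\<close>)
    then have "ind A = ind B"
      by (rule fcm_inj[OF red F G h, rotated 2]) (use A B in \<open>auto simp: ind_ne0 S_def\<close>)
    then show "A = B" by (rule ind_inj)
  qed
  have "card (Pow S) \<le> card (Pow S')"
    by (rule card_inj_on_le[OF inj sub]) (use fS in simp)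
  then have "(2::nat) ^ card S \<le> 2 ^ card S'" using fS by (simp add: card_Pow)
  then show ?thesis unfolding S_def S'_def by (rule power_le_imp_le_exp[rotated]) simp
qed

lemma count_eq:
  assumes "fequiv C C'" "reduced C" "reduced C'"
  shows "card {i. i < dim C \<and> gr C i = k} = card {i. i < dim C' \<and> gr C' i = k}"
proof -
  from assms(1) obtain F G H H' where F: "filt_chain_map C C' F" and G: "filt_chain_map C' C G"
    and h1: "htpy_id C (mmul (dim C') G F) H" and h1': "htpy_id C' (mmul (dim C) F G) H'"
    unfolding fequiv_def by blast
  show ?thesis using count_le[OF assms(2) F G h1, of k] count_le[OF assms(3) G F h1', of k] by (rule le_antisym)
qed

lemma sum_by_count:
  fixes f :: "int \<Rightarrow> 'a::comm_semiring_1" and g :: "nat \<Rightarrow> int"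
  shows "(\<Sum>i<n. f (g i)) = (\<Sum>k\<in>g ` {..<n}. of_nat (card {i. i < n \<and> g i = k}) * f k)"
proof -
  have "(\<Sum>i<n. f (g i)) = (\<Sum>k\<in>g ` {..<n}. \<Sum>i\<in>{i\<in>{..<n}. g i = k}. f (g i))"
    using sum.image_gen[OF finite_lessThan, of "\<lambda>i. f (g i)" n g] by simp
  also have "\<dots> = (\<Sum>k\<in>g ` {..<n}. of_nat (card {i. i < n \<and> g i = k}) * f k)"
  proof (rule sum.cong[OF refl])
    fix k assume "k \<in> g ` {..<n}"
    have "(\<Sum>i\<in>{i\<in>{..<n}. g i = k}. f (g i)) = (\<Sum>i\<in>{i. i < n \<and> g i = k}. f k)"
      by (rule sum.cong) auto
    then show "(\<Sum>i\<in>{i\<in>{..<n}. g i = k}. f (g i)) = of_nat (card {i. i < n \<and> g i = k}) * f k"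
      by simp
  qed
  finally show ?thesis .
qed

lemma sum_count_transfer:
  fixes f :: "int \<Rightarrow> 'a::comm_semiring_1" and g g' :: "nat \<Rightarrow> int"
  assumes "\<And>k. card {i. i < n \<and> g i = k} = card {i. i < n' \<and> g' i = k}"
  shows "(\<Sum>i<n. f (g i)) = (\<Sum>i<n'. f (g' i))"
proof -
  have im: "g ` {..<n} = g' ` {..<n'}"
  proof -
    have cz: "k \<in> h ` {..<m} \<longleftrightarrow> card {i. i < m \<and> h i = k} \<noteq> 0" for k m and h :: "nat \<Rightarrow> int"
    proof -
      have fin: "finite {i. i < m \<and> h i = k}" by auto
      have "k \<in> h ` {..<m} \<longleftrightarrow> {i. i < m \<and> h i = k} \<noteq> {}" by auto
      then show ?thesis using card_0_eq[OF fin] by simp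
    qed
    have "k \<in> g ` {..<n} \<longleftrightarrow> card {i. i < n \<and> g i = k} \<noteq> 0" for k by (rule cz)
    moreover have "k \<in> g' ` {..<n'} \<longleftrightarrow> card {i. i < n' \<and> g' i = k} \<noteq> 0" for k by (rule cz)
    ultimately show ?thesis using assms by (simp add: set_eq_iff)
  qed
  have "(\<Sum>i<n. f (g i)) = (\<Sum>k\<in>g' ` {..<n'}. of_nat (card {i. i < n \<and> g i = k}) * f k)"
    unfolding sum_by_count[of f g n] im ..
  also have "\<dots> = (\<Sum>i<n'. f (g' i))"
    unfolding sum_by_count[of f g' n'] assms ..
  finally show ?thesis .
qed

definition hrel :: "cx \<Rightarrow> int \<Rightarrow> ((nat \<Rightarrow> bit) \<times> (nat \<Rightarrow> bit)) set" where
  "hrel C k = {(x, y). x \<in> cycles C k \<and> y \<in> cycles C k \<and> x - y \<in> boundaries C k}"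

lemma homology_hrel: "homology C k = cycles C k // hrel C k"
  unfolding homology_def hrel_def ..

lemma fun_minus_bit: "(x::nat \<Rightarrow> bit) - y = (\<lambda>i. x i + y i)"
  by (rule ext) (simp only: fun_diff_def minus_bit_def)

lemma bnd_zero: "(\<lambda>i. 0) \<in> boundaries C k"
  unfolding boundaries_def
  by (rule CollectI, rule exI[of _ "\<lambda>i. 0"]) (simp only: app_zero, simp)

lemma bnd_add:
  assumes "a \<in> boundaries C k" "b \<in> boundaries C k"
  shows "(\<lambda>i. a i + b i) \<in> boundaries C k"
proof -
  obtain w1 where w1: "a = app (dim C) (dd C) w1" "\<And>i. w1 i \<noteq> 0 \<Longrightarrow> i < dim C \<and> gr C i = k + 1"
    using assms(1) unfolding boundaries_def by blast
  obtain w2 where w2: "b = app (dim C) (dd C) w2" "\<And>i. w2 i \<noteq> 0 \<Longrightarrow> i < dim C \<and> gr C i = k + 1"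
    using assms(2) unfolding boundaries_def by blast
  have s: "i < dim C \<and> gr C i = k + 1" if "w1 i + w2 i \<noteq> 0" for i
  proof (cases "w1 i = 0")
    case True then have "w2 i \<noteq> 0" using that by simp
    then show ?thesis by (rule w2(2))
  next
    case False then show ?thesis by (rule w1(2))
  qed
  have "(\<lambda>i. a i + b i) = app (dim C) (dd C) (\<lambda>i. w1 i + w2 i)"
    unfolding w1(1) w2(1) app_addV ..
  then show ?thesis unfolding boundaries_def using s by blast
qed

lemma bit_trans_id: "(x::bit) + z = (x + y) + (y + z)"
  by (cases x; cases y; cases z) (simp_all add: add_bit_eq_xor)

lemma hrel_equiv: "equiv (cycles C k) (hrel C k)"
proof (rule equivI)
  show "hrel C k \<subseteq> cycles C k \<times> cycles C k" unfolding hrel_def by auto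
next
  show "refl_on (cycles C k) (hrel C k)"
  proof (rule refl_onI)
    fix x assume "x \<in> cycles C k"
    moreover have "x - x = (\<lambda>i. 0)" unfolding fun_minus_bit by (rule ext) (rule bit_add_self)
    ultimately show "(x, x) \<in> hrel C k" unfolding hrel_def using bnd_zero by auto
  qed
next
  show "sym (hrel C k)"
  proof (rule symI)
    fix x y assume "(x, y) \<in> hrel C k"
    moreover have "y - x = x - y" unfolding fun_minus_bit by (rule ext) (rule add.commute)
    ultimately show "(y, x) \<in> hrel C k" unfolding hrel_def by auto
  qed
next
  show "trans (hrel C k)"
  proof (rule transI)
    fix x y z assume "(x, y) \<in> hrel C k" "(y, z) \<in> hrel C k"
    then have a: "x - y \<in> boundaries C k" "y - z \<in> boundaries C k" and c: "x \<in> cycles C k" "z \<in> cycles C k"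
      unfolding hrel_def by auto
    have "x - z = (\<lambda>i. (x - y) i + (y - z) i)" unfolding fun_minus_bit by (rule ext) (rule bit_trans_id)
    then have "x - z \<in> boundaries C k" using bnd_add[OF a] by simp
    with c show "(x, z) \<in> hrel C k" unfolding hrel_def by auto
  qed
qed

lemma supp_ind: "(\<And>i. v i \<noteq> 0 \<Longrightarrow> i \<in> A) \<Longrightarrow> v \<in> ind ` Pow A"
proof -
  assume a: "\<And>i. v i \<noteq> 0 \<Longrightarrow> i \<in> A"
  have "v = ind {i. v i \<noteq> 0}"
    by (rule bit_eq_from_ne0) (simp add: ind_ne0)
  moreover have "{i. v i \<noteq> 0} \<in> Pow A" using a by auto
  ultimately show ?thesis by blast
qed

lemma cycles_finite: "finite (cycles C k)"
proof -
  have "cycles C k \<subseteq> ind ` Pow {..<dim C}"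
    by (auto simp: cycles_def intro!: supp_ind)
  then show ?thesis by (rule finite_subset) simp
qed

lemma homology_finite: "finite (homology C k)"
proof -
  have "homology C k \<subseteq> Pow (cycles C k)"
    unfolding homology_hrel quotient_def hrel_def by auto
  moreover have "finite (Pow (cycles C k))" using cycles_finite by simp
  ultimately show ?thesis by (rule finite_subset)
qed

lemma quot_card_le:
  assumes eq: "equiv Z R" and eq': "equiv Z' R'" and fin: "finite (Z' // R')"
    and f: "\<And>x. x \<in> Z \<Longrightarrow> f x \<in> Z'"
    and fr: "\<And>x y. (x, y) \<in> R \<Longrightarrow> (f x, f y) \<in> R'"
    and gr: "\<And>x y. (x, y) \<in> R' \<Longrightarrow> (g x, g y) \<in> R"
    and gf: "\<And>x. x \<in> Z \<Longrightarrow> (g (f x), x) \<in> R"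
  shows "card (Z // R) \<le> card (Z' // R')"
proof -
  define \<Phi> where "\<Phi> = (\<lambda>X. R' `` (f ` X))"
  have cls: "\<Phi> (R `` {x}) = R' `` {f x}" if x: "x \<in> Z" for x
  proof
    show "\<Phi> (R `` {x}) \<subseteq> R' `` {f x}"
    proof
      fix z assume "z \<in> \<Phi> (R `` {x})"
      then obtain y where y: "(x, y) \<in> R" "(f y, z) \<in> R'" unfolding \<Phi>_def by auto
      have "(f x, f y) \<in> R'" by (rule fr[OF y(1)])
      then have "(f x, z) \<in> R'" using y(2) eq' unfolding equiv_def by (meson transD)
      then show "z \<in> R' `` {f x}" by simp
    qed
  next
    show "R' `` {f x} \<subseteq> \<Phi> (R `` {x})"
    proof
      fix z assume "z \<in> R' `` {f x}"
      moreover have "(x, x) \<in> R" using eq x unfolding equiv_def refl_on_def by blast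
      ultimately show "z \<in> \<Phi> (R `` {x})" unfolding \<Phi>_def by blast
    qed
  qed
  have inj: "inj_on \<Phi> (Z // R)"
  proof (rule inj_onI)
    fix X Y assume X: "X \<in> Z // R" and Y: "Y \<in> Z // R" and e: "\<Phi> X = \<Phi> Y"
    from X obtain x where x: "x \<in> Z" "X = R `` {x}" by (auto elim: quotientE)
    from Y obtain y where y: "y \<in> Z" "Y = R `` {y}" by (auto elim: quotientE)
    have "R' `` {f x} = R' `` {f y}" using e cls x y by simp
    then have "(f x, f y) \<in> R'" using eq' f x(1) f y(1) by (simp add: eq_equiv_class_iff)
    then have "(g (f x), g (f y)) \<in> R" by (rule gr)
    then have "(x, y) \<in> R" using gf[OF x(1)] gf[OF y(1)] eq unfolding equiv_def
      by (meson symD transD)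
    then show "X = Y" using x y eq by (simp add: equiv_class_eq)
  qed
  have sub: "\<Phi> ` (Z // R) \<subseteq> Z' // R'"
  proof
    fix W assume "W \<in> \<Phi> ` (Z // R)"
    then obtain x where x: "x \<in> Z" "W = \<Phi> (R `` {x})" by (auto elim: quotientE)
    then show "W \<in> Z' // R'" using cls f by (auto intro: quotientI)
  qed
  show ?thesis by (rule card_inj_on_le[OF inj sub fin])
qed

lemma app_minus: "app n F (x - y) = app n F x - app n F y"
  unfolding fun_minus_bit app_addV ..

lemma fcm_cycles:
  assumes F: "filt_chain_map C C' F" and x: "x \<in> cycles C k"
  shows "app (dim C) F x \<in> cycles C' k"
proof -
  have xs: "\<And>i. x i \<noteq> 0 \<Longrightarrow> i < dim C \<and> gr C i = k" and dx: "app (dim C) (dd C) x = (\<lambda>i. 0)"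
    using x unfolding cycles_def by blast+
  have s: "i < dim C' \<and> gr C' i = k" if "app (dim C) F x i \<noteq> 0" for i
  proof -
    from app_ne0[OF that] obtain j where "F i j \<noteq> 0" "x j \<noteq> 0" by blast
    with fcm_ne0[OF F] xs show ?thesis by metis
  qed
  have "app (dim C') (dd C') (app (dim C) F x) = app (dim C) (mmul (dim C') (dd C') F) x"
    by (simp only: app_mmul)
  also have "\<dots> = app (dim C) F (app (dim C) (dd C) x)"
    by (simp only: fcm_comm[OF F] app_mmul)
  also have "\<dots> = (\<lambda>i. 0)" by (simp only: dx app_zero)
  finally show ?thesis unfolding cycles_def using s by blast
qed

lemma fcm_bnd:
  assumes F: "filt_chain_map C C' F" and x: "x \<in> boundaries C k"
  shows "app (dim C) F x \<in> boundaries C' k"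
proof -
  obtain w where w: "x = app (dim C) (dd C) w" "\<And>i. w i \<noteq> 0 \<Longrightarrow> i < dim C \<and> gr C i = k + 1"
    using x unfolding boundaries_def by blast
  have s: "i < dim C' \<and> gr C' i = k + 1" if "app (dim C) F w i \<noteq> 0" for i
  proof -
    from app_ne0[OF that] obtain j where "F i j \<noteq> 0" "w j \<noteq> 0" by blast
    with fcm_ne0[OF F] w(2) show ?thesis by metis
  qed
  have "app (dim C) F x = app (dim C) (mmul (dim C) F (dd C)) w"
    unfolding w(1) by (simp only: app_mmul)
  also have "\<dots> = app (dim C) (mmul (dim C') (dd C') F) w" by (simp only: fcm_comm[OF F])
  also have "\<dots> = app (dim C') (dd C') (app (dim C) F w)" by (simp only: app_mmul)
  finally have "app (dim C) F x = app (dim C') (dd C') (app (dim C) F w)" .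
  then show ?thesis unfolding boundaries_def using s by blast
qed

lemma fcm_hrel:
  assumes F: "filt_chain_map C C' F" and xy: "(x, y) \<in> hrel C k"
  shows "(app (dim C) F x, app (dim C) F y) \<in> hrel C' k"
  using xy fcm_cycles[OF F] fcm_bnd[OF F] unfolding hrel_def
  by (auto simp only: app_minus[symmetric] mem_Collect_eq case_prod_conv)

lemma bit_id_h: "((x::bit) + b + c) + x = b + c"
  by (cases x; cases b; cases c) (simp_all add: add_bit_eq_xor)

lemma bit_id_h2: "((x::bit) + b) + x = b"
  by (cases x; cases b) (simp_all add: add_bit_eq_xor)

lemma htpy_hrel:
  assumes F: "filt_chain_map C C' F" and G: "filt_chain_map C' C G"
    and h: "htpy_id C (mmul (dim C') G F) H" and x: "x \<in> cycles C k"
  shows "(app (dim C') G (app (dim C) F x), x) \<in> hrel C k"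
proof -
  have xs: "\<And>i. x i \<noteq> 0 \<Longrightarrow> i < dim C \<and> gr C i = k" and dx: "app (dim C) (dd C) x = (\<lambda>i. 0)"
    using x unfolding cycles_def by blast+
  have hH: "filt_htpy C H" and eH: "mmul (dim C') G F = (\<lambda>i j. idm (dim C) i j + mmul (dim C) (dd C) H i j + mmul (dim C) H (dd C) i j)"
    using h unfolding htpy_id_def by blast+
  have ai: "app (dim C) (idm (dim C)) x = x" by (rule app_idm) (use xs in blast)
  have z: "app (dim C) H (app (dim C) (dd C) x) = (\<lambda>i. 0)"
    by (simp only: dx app_zero)
  have "app (dim C') G (app (dim C) F x) = app (dim C) (mmul (dim C') G F) x" by (simp only: app_mmul)
  also have "\<dots> = (\<lambda>i. x i + app (dim C) (dd C) (app (dim C) H x) i + 0)"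
    by (simp only: eH app_addM ai z app_mmul)
  finally have e: "app (dim C') G (app (dim C) F x) = (\<lambda>i. x i + app (dim C) (dd C) (app (dim C) H x) i + 0)" .
  have s: "i < dim C \<and> gr C i = k + 1" if "app (dim C) H x i \<noteq> 0" for i
  proof -
    from app_ne0[OF that] obtain j where "H i j \<noteq> 0" "x j \<noteq> 0" by blast
    with hH xs show ?thesis unfolding filt_htpy_def by force
  qed
  have "app (dim C') G (app (dim C) F x) - x = app (dim C) (dd C) (app (dim C) H x)"
    unfolding e fun_minus_bit by (rule ext) (simp only: add_0_right bit_id_h2)
  then have "app (dim C') G (app (dim C) F x) - x \<in> boundaries C k"
    unfolding boundaries_def using s by blast
  moreover have "app (dim C') G (app (dim C) F x) \<in> cycles C k"
    by (rule fcm_cycles[OF G fcm_cycles[OF F x]])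
  ultimately show ?thesis using x unfolding hrel_def by blast
qed

lemma hom_card_le:
  assumes F: "filt_chain_map C C' F" and G: "filt_chain_map C' C G"
    and h: "htpy_id C (mmul (dim C') G F) H"
  shows "card (homology C k) \<le> card (homology C' k)"
  unfolding homology_hrel
proof (rule quot_card_le[OF hrel_equiv hrel_equiv])
  show "finite (cycles C' k // hrel C' k)" using homology_finite unfolding homology_hrel .
  show "\<And>x. x \<in> cycles C k \<Longrightarrow> app (dim C) F x \<in> cycles C' k" by (rule fcm_cycles[OF F])
  show "\<And>x y. (x, y) \<in> hrel C k \<Longrightarrow> (app (dim C) F x, app (dim C) F y) \<in> hrel C' k" by (rule fcm_hrel[OF F])
  show "\<And>x y. (x, y) \<in> hrel C' k \<Longrightarrow> (app (dim C') G x, app (dim C') G y) \<in> hrel C k" by (rule fcm_hrel[OF G])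
  show "\<And>x. x \<in> cycles C k \<Longrightarrow> (app (dim C') G (app (dim C) F x), x) \<in> hrel C k" by (rule htpy_hrel[OF F G h])
qed

lemma hom_card_eq:
  assumes "fequiv C C'"
  shows "card (homology C k) = card (homology C' k)"
proof -
  from assms obtain F G H H' where F: "filt_chain_map C C' F" and G: "filt_chain_map C' C G"
    and h1: "htpy_id C (mmul (dim C') G F) H" and h1': "htpy_id C' (mmul (dim C) F G) H'"
    unfolding fequiv_def by blast
  show ?thesis using hom_card_le[OF F G h1, of k] hom_card_le[OF G F h1', of k] by (rule le_antisym)
qed

definition unp :: "cx \<Rightarrow> nat \<Rightarrow> bool" where
  "unp B u \<longleftrightarrow> u < dim B \<and> (\<forall>j. dd B u j = 0) \<and> (\<forall>i. dd B i u = 0)"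

lemma bar_cx: "is_bar_cx B \<Longrightarrow> is_cx B"
  unfolding is_bar_cx_def by blast

lemma bar_bounds: "is_bar_cx B \<Longrightarrow> dd B i j \<noteq> 0 \<Longrightarrow> i < dim B \<and> j < dim B \<and> gr B i + 1 = gr B j \<and> fl B i < fl B j"
  unfolding is_bar_cx_def is_cx_def by blast

lemma bar_row:
  assumes B: "is_bar_cx B" and a: "dd B i j \<noteq> 0" and b: "dd B i j' \<noteq> 0"
  shows "j = j'"
proof -
  have c: "card {j. dd B i j \<noteq> 0} \<le> Suc 0" using B unfolding is_bar_cx_def by simp
  have "{j. dd B i j \<noteq> 0} \<subseteq> {..<dim B}" using bar_bounds[OF B] by auto
  then have f: "finite {j. dd B i j \<noteq> 0}" by (rule finite_subset) simp
  show ?thesis using c a b unfolding card_le_Suc0_iff_eq[OF f] by blast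
qed

lemma bar_col:
  assumes B: "is_bar_cx B" and a: "dd B i j \<noteq> 0" and b: "dd B i' j \<noteq> 0"
  shows "i = i'"
proof -
  have c: "card {i. dd B i j \<noteq> 0} \<le> Suc 0" using B unfolding is_bar_cx_def by simp
  have "{i. dd B i j \<noteq> 0} \<subseteq> {..<dim B}" using bar_bounds[OF B] by auto
  then have f: "finite {i. dd B i j \<noteq> 0}" by (rule finite_subset) simp
  show ?thesis using c a b unfolding card_le_Suc0_iff_eq[OF f] by blast
qed

lemma sum_single:
  assumes "finite A" "j \<in> A" "\<And>m. m \<in> A \<Longrightarrow> m \<noteq> j \<Longrightarrow> f m = 0"
  shows "sum f A = f j"
proof -
  have "sum f A = f j + sum f (A - {j})" using assms(1,2) by (rule sum.remove)
  also have "sum f (A - {j}) = 0" using assms(3) by (intro sum.neutral) auto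
  finally show ?thesis by simp
qed

lemma bit_one: "(a::bit) \<noteq> 0 \<Longrightarrow> a = 1"
  by (simp add: bit_not_zero_iff)

lemma app_row:
  assumes B: "is_bar_cx B" and a: "dd B i j \<noteq> 0"
  shows "app (dim B) (dd B) v i = v j"
proof -
  have "app (dim B) (dd B) v i = dd B i j * v j"
    unfolding app_def
  proof (rule sum_single)
    show "j \<in> {..<dim B}" using bar_bounds[OF B a] by simp
    fix m assume "m \<noteq> j"
    then have "dd B i m = 0" using bar_row[OF B a, of m] by blast
    then show "dd B i m * v m = 0" by simp
  qed simp
  then show ?thesis using bit_one[OF a] by simp
qed

lemma app_zero_row:
  assumes "\<And>j. dd B i j = 0"
  shows "app (dim B) (dd B) v i = 0"
  unfolding app_def using assms by simp

lemma bar_d2: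
  assumes B: "is_bar_cx B" and a: "dd B a b \<noteq> 0" and b: "dd B b c \<noteq> 0"
  shows False
proof -
  have "mmul (dim B) (dd B) (dd B) a c = 0" using bar_cx[OF B] unfolding is_cx_def by simp
  moreover have "mmul (dim B) (dd B) (dd B) a c = dd B a b * dd B b c"
    unfolding mmul_def
  proof (rule sum_single)
    show "b \<in> {..<dim B}" using bar_bounds[OF B a] by simp
    fix m assume "m \<noteq> b"
    then have "dd B a m = 0" using bar_row[OF B a, of m] by blast
    then show "dd B a m * dd B m c = 0" by simp
  qed simp
  moreover have "dd B a b * dd B b c = 1" using bit_one[OF a] bit_one[OF b] by simp
  ultimately show False by simp
qed

lemma zero_cycle: "(\<lambda>i. 0) \<in> cycles B k"
  unfolding cycles_def by (simp add: app_zero)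

lemma ind1_cycle:
  assumes u: "unp B u" and g: "gr B u = k"
  shows "ind {u} \<in> cycles B k"
proof -
  have "app (dim B) (dd B) (ind {u}) = (\<lambda>i. 0)"
  proof (rule ext)
    fix i
    show "app (dim B) (dd B) (ind {u}) i = 0"
      unfolding app_def
    proof (rule sum.neutral, rule ballI)
      fix m show "dd B i m * ind {u} m = 0"
        using u unfolding unp_def ind_def by (cases "m = u") auto
    qed
  qed
  moreover have "ind {u} i \<noteq> 0 \<Longrightarrow> i < dim B \<and> gr B i = k" for i
    using u g unfolding unp_def ind_ne0 by auto
  ultimately show ?thesis unfolding cycles_def by blast
qed

lemma bnd_at_unp:
  assumes u: "unp B u" and v: "v \<in> boundaries B k"
  shows "v u = 0"
proof -
  obtain w where "v = app (dim B) (dd B) w" using v unfolding boundaries_def by blast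
  then show ?thesis using app_zero_row[of B u w] u unfolding unp_def by simp
qed

lemma ind_at: "ind A i = (if i \<in> A then 1 else 0)"
  unfolding ind_def ..

lemma not_hrel_ind:
  assumes u: "unp B u" and "x u = 1" and "y u = 0"
  shows "(x, y) \<notin> hrel B k"
proof
  assume "(x, y) \<in> hrel B k"
  then have "x - y \<in> boundaries B k" unfolding hrel_def by simp
  then have "(x - y) u = 0" by (rule bnd_at_unp[OF u])
  moreover have "(x - y) u = 1" unfolding fun_minus_bit using assms(2,3) by simp
  ultimately show False by simp
qed

lemma hom_ge2:
  assumes u: "unp B u" and g: "gr B u = k"
  shows "2 \<le> card (homology B k)"
proof -
  let ?R = "hrel B k" and ?Z = "cycles B k"
  have c0: "?R `` {\<lambda>i. 0} \<in> homology B k" unfolding homology_hrel by (rule quotientI[OF zero_cycle])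
  have c1: "?R `` {ind {u}} \<in> homology B k" unfolding homology_hrel by (rule quotientI[OF ind1_cycle[OF u g]])
  have "(ind {u}, \<lambda>i. 0) \<notin> ?R" by (rule not_hrel_ind[OF u]) (simp_all add: ind_at)
  then have ne: "?R `` {ind {u}} \<noteq> ?R `` {\<lambda>i. 0}"
    using eq_equiv_class_iff[OF hrel_equiv ind1_cycle[OF u g] zero_cycle] by blast
  have "card {?R `` {ind {u}}, ?R `` {\<lambda>i. 0}} = 2" using ne by simp
  moreover have "card {?R `` {ind {u}}, ?R `` {\<lambda>i. 0}} \<le> card (homology B k)"
    by (rule card_mono[OF homology_finite]) (use c0 c1 in blast)
  ultimately show ?thesis by simp
qed

lemma hom_ge3:
  assumes u: "unp B u" and gu: "gr B u = k" and w: "unp B w" and gw: "gr B w = k" and uw: "u \<noteq> w"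
  shows "3 \<le> card (homology B k)"
proof -
  let ?R = "hrel B k" and ?Z = "cycles B k"
  have c0: "?R `` {\<lambda>i. 0} \<in> homology B k" unfolding homology_hrel by (rule quotientI[OF zero_cycle])
  have c1: "?R `` {ind {u}} \<in> homology B k" unfolding homology_hrel by (rule quotientI[OF ind1_cycle[OF u gu]])
  have c2: "?R `` {ind {w}} \<in> homology B k" unfolding homology_hrel by (rule quotientI[OF ind1_cycle[OF w gw]])
  have "(ind {u}, \<lambda>i. 0) \<notin> ?R" by (rule not_hrel_ind[OF u]) (simp_all add: ind_at)
  then have ne1: "?R `` {ind {u}} \<noteq> ?R `` {\<lambda>i. 0}"
    using eq_equiv_class_iff[OF hrel_equiv ind1_cycle[OF u gu] zero_cycle] by blast
  have "(ind {w}, \<lambda>i. 0) \<notin> ?R" by (rule not_hrel_ind[OF w]) (simp_all add: ind_at)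
  then have ne2: "?R `` {ind {w}} \<noteq> ?R `` {\<lambda>i. 0}"
    using eq_equiv_class_iff[OF hrel_equiv ind1_cycle[OF w gw] zero_cycle] by blast
  have "(ind {u}, ind {w}) \<notin> ?R" by (rule not_hrel_ind[OF u]) (use uw in \<open>simp_all add: ind_at\<close>)
  then have ne3: "?R `` {ind {u}} \<noteq> ?R `` {ind {w}}"
    using eq_equiv_class_iff[OF hrel_equiv ind1_cycle[OF u gu] ind1_cycle[OF w gw]] by blast
  have "card {?R `` {ind {u}}, ?R `` {ind {w}}, ?R `` {\<lambda>i. 0}} = 3" using ne1 ne2 ne3 by simp
  moreover have "card {?R `` {ind {u}}, ?R `` {ind {w}}, ?R `` {\<lambda>i. 0}} \<le> card (homology B k)"
    by (rule card_mono[OF homology_finite]) (use c0 c1 c2 in blast)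
  ultimately show ?thesis by simp
qed

lemma bit_ind_self: "(if (a::bit) \<noteq> 0 then 1 else 0) = a"
  by (cases a) simp_all

lemma cycle_is_bnd:
  assumes B: "is_bar_cx B" and nu: "\<And>u. unp B u \<Longrightarrow> gr B u \<noteq> k" and v: "v \<in> cycles B k"
  shows "v \<in> boundaries B k"
proof -
  have vs: "\<And>i. v i \<noteq> 0 \<Longrightarrow> i < dim B \<and> gr B i = k" and dv: "app (dim B) (dd B) v = (\<lambda>i. 0)"
    using v unfolding cycles_def by blast+
  have top0: "v j = 0" if "dd B i j \<noteq> 0" for i j
  proof -
    have "v j = app (dim B) (dd B) v i" using app_row[OF B that] by simp
    also have "\<dots> = 0" using dv by simp
    finally show ?thesis .
  qed
  define w where "w = (\<lambda>j. if (\<exists>i. dd B i j \<noteq> 0 \<and> v i \<noteq> 0) then 1 else (0::bit))"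
  have ws: "j < dim B \<and> gr B j = k + 1" if "w j \<noteq> 0" for j
  proof -
    from that obtain i where "dd B i j \<noteq> 0" "v i \<noteq> 0" unfolding w_def by (auto split: if_splits)
    with bar_bounds[OF B] vs show ?thesis by force
  qed
  have "app (dim B) (dd B) w = v"
  proof (rule ext)
    fix i
    show "app (dim B) (dd B) w i = v i"
    proof (cases "\<exists>j. dd B i j \<noteq> 0")
      case True
      then obtain j where j: "dd B i j \<noteq> 0" by blast
      have "app (dim B) (dd B) w i = w j" by (rule app_row[OF B j])
      also have "(\<exists>i'. dd B i' j \<noteq> 0 \<and> v i' \<noteq> 0) \<longleftrightarrow> v i \<noteq> 0"
        using j bar_col[OF B j] by blast
      then have "w j = (if v i \<noteq> 0 then 1 else 0)" unfolding w_def by simp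
      finally show ?thesis by (simp only: bit_ind_self)
    next
      case False
      then have "app (dim B) (dd B) w i = 0" by (intro app_zero_row) blast
      moreover have "v i = 0"
      proof (rule ccontr)
        assume vi: "v i \<noteq> 0"
        then have "i < dim B" "gr B i = k" using vs by auto
        moreover have "\<forall>i'. dd B i' i = 0" using top0 vi by blast
        ultimately have "unp B i" using False unfolding unp_def by blast
        with nu \<open>gr B i = k\<close> show False by blast
      qed
      ultimately show ?thesis by simp
    qed
  qed
  then show ?thesis unfolding boundaries_def using ws by blast
qed

lemma hom_eq1:
  assumes B: "is_bar_cx B" and nu: "\<And>u. unp B u \<Longrightarrow> gr B u \<noteq> k"
  shows "card (homology B k) = 1"
proof -
  let ?R = "hrel B k" and ?Z = "cycles B k"
  have rel0: "(v, \<lambda>i. 0) \<in> ?R" if "v \<in> ?Z" for v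
  proof -
    have "v - (\<lambda>i. 0) = v" unfolding fun_minus_bit by simp
    then show ?thesis using cycle_is_bnd[OF B nu that] that zero_cycle unfolding hrel_def by simp
  qed
  have "?Z // ?R = {?R `` {\<lambda>i. 0}}"
  proof
    show "?Z // ?R \<subseteq> {?R `` {\<lambda>i. 0}}"
    proof
      fix X assume "X \<in> ?Z // ?R"
      then obtain v where "v \<in> ?Z" "X = ?R `` {v}" by (auto elim: quotientE)
      then show "X \<in> {?R `` {\<lambda>i. 0}}" using equiv_class_eq[OF hrel_equiv rel0] by simp
    qed
  next
    show "{?R `` {\<lambda>i. 0}} \<subseteq> ?Z // ?R" using quotientI[OF zero_cycle] by blast
  qed
  then show ?thesis unfolding homology_hrel by simp
qed

lemma bar_unp_unique:
  assumes B: "is_bar_cx B" and e: "fequiv C B" and h: "hom_one_in_zero C"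
  shows "\<exists>u0. unp B u0 \<and> gr B u0 = 0 \<and> (\<forall>u. unp B u \<longrightarrow> u = u0)"
proof -
  have ck: "card (homology B k) = (if k = 0 then 2 else 1)" for k
    using hom_card_eq[OF e, of k] h unfolding hom_one_in_zero_def by auto
  have g0: "gr B u = 0" if "unp B u" for u
  proof (rule ccontr)
    assume "gr B u \<noteq> 0"
    with hom_ge2[OF that refl] ck[of "gr B u"] show False by simp
  qed
  have "\<exists>u. unp B u \<and> gr B u = 0"
  proof (rule ccontr)
    assume "\<not> (\<exists>u. unp B u \<and> gr B u = 0)"
    then have "card (homology B 0) = 1" by (intro hom_eq1[OF B]) blast
    with ck[of 0] show False by simp
  qed
  then obtain u0 where u0: "unp B u0" "gr B u0 = 0" by blast
  have "u = u0" if "unp B u" for u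
  proof (rule ccontr)
    assume "u \<noteq> u0"
    with hom_ge3[OF that g0[OF that] u0] ck[of 0] show False by simp
  qed
  with u0 show ?thesis by blast
qed

definition bars :: "cx \<Rightarrow> (nat \<times> nat) set" where
  "bars B = {(i, j). dd B i j \<noteq> 0}"

lemma bars_finite: "is_bar_cx B \<Longrightarrow> finite (bars B)"
proof -
  assume B: "is_bar_cx B"
  have "bars B \<subseteq> {..<dim B} \<times> {..<dim B}" using bar_bounds[OF B] unfolding bars_def by auto
  then show ?thesis by (rule finite_subset) simp
qed

lemma bar_sum:
  fixes f :: "int \<Rightarrow> int"
  assumes B: "is_bar_cx B" and u0: "unp B u0" "gr B u0 = 0" and uq: "\<And>u. unp B u \<Longrightarrow> u = u0"
  shows "(\<Sum>i<dim B. f (gr B i)) = f 0 + (\<Sum>p\<in>bars B. f (gr B (fst p)) + f (gr B (fst p) + 1))"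
proof -
  let ?P = "bars B"
  have fP: "finite ?P" by (rule bars_finite[OF B])
  have dec: "{..<dim B} = insert u0 (fst ` ?P \<union> snd ` ?P)"
  proof
    show "{..<dim B} \<subseteq> insert u0 (fst ` ?P \<union> snd ` ?P)"
    proof
      fix i assume i: "i \<in> {..<dim B}"
      show "i \<in> insert u0 (fst ` ?P \<union> snd ` ?P)"
      proof (cases "i \<in> fst ` ?P \<union> snd ` ?P")
        case False
        then have "(\<forall>j. dd B i j = 0) \<and> (\<forall>j. dd B j i = 0)" unfolding bars_def by force
        then have "unp B i" using i unfolding unp_def by simp
        then show ?thesis using uq by simp
      qed simp
    qed
  next
    show "insert u0 (fst ` ?P \<union> snd ` ?P) \<subseteq> {..<dim B}"
      using u0 bar_bounds[OF B] unfolding unp_def bars_def by auto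
  qed
  have u0n: "u0 \<notin> fst ` ?P \<union> snd ` ?P" using u0 unfolding unp_def bars_def by auto
  have disj: "fst ` ?P \<inter> snd ` ?P = {}"
  proof (rule ccontr)
    assume "fst ` ?P \<inter> snd ` ?P \<noteq> {}"
    then obtain i j a where "dd B i j \<noteq> 0" "dd B a i \<noteq> 0" unfolding bars_def by force
    then show False using bar_d2[OF B] by blast
  qed
  have injf: "inj_on fst ?P"
    by (rule inj_onI) (auto simp: bars_def dest: bar_row[OF B])
  have injs: "inj_on snd ?P"
    by (rule inj_onI) (auto simp: bars_def dest: bar_col[OF B])
  have "(\<Sum>i<dim B. f (gr B i)) = f (gr B u0) + ((\<Sum>i\<in>fst ` ?P. f (gr B i)) + (\<Sum>i\<in>snd ` ?P. f (gr B i)))"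
    unfolding dec using fP u0n disj by (simp add: sum.union_disjoint)
  also have "(\<Sum>i\<in>fst ` ?P. f (gr B i)) = (\<Sum>p\<in>?P. f (gr B (fst p)))"
    using sum.reindex[OF injf] by simp
  also have "(\<Sum>i\<in>snd ` ?P. f (gr B i)) = (\<Sum>p\<in>?P. f (gr B (snd p)))"
    using sum.reindex[OF injs] by simp
  also have "(\<Sum>p\<in>?P. f (gr B (snd p))) = (\<Sum>p\<in>?P. f (gr B (fst p) + 1))"
    by (rule sum.cong) (auto simp: bars_def dest: bar_bounds[OF B])
  finally show ?thesis using u0 by (simp add: sum.distrib)
qed

definition sg :: "int \<Rightarrow> int" where "sg g = (if even g then 1 else -1)"
definition wt :: "int \<Rightarrow> int" where "wt g = - sg g * g"

lemma sg_add: "sg (x + y) = sg x * sg y"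
  unfolding sg_def by auto

lemma wt_add: "wt (x + y) = wt x * sg y + sg x * wt y"
  unfolding wt_def sg_add by (simp add: algebra_simps)

lemma sg_step: "sg g + sg (g + 1) = 0"
  unfolding sg_def by auto

lemma wt_step: "wt g + wt (g + 1) = sg g"
  unfolding wt_def sg_def by auto

lemma even_bars_alt: "even_bars B = card {p \<in> bars B. even (gr B (fst p))}"
  unfolding even_bars_def bars_def by (rule arg_cong[where f = card]) auto

lemma odd_bars_alt: "odd_bars B = card {p \<in> bars B. odd (gr B (fst p))}"
  unfolding odd_bars_def bars_def by (rule arg_cong[where f = card]) auto

lemma bar_facts:
  assumes B: "is_bar_cx B" and u0: "unp B u0" "gr B u0 = 0" and uq: "\<And>u. unp B u \<Longrightarrow> u = u0"
  shows "int (dim B) = 1 + 2 * (int (even_bars B) + int (odd_bars B))"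
    and "(\<Sum>i<dim B. sg (gr B i)) = 1"
    and "(\<Sum>i<dim B. wt (gr B i)) = int (even_bars B) - int (odd_bars B)"
proof -
  let ?P = "bars B"
  let ?E = "{p \<in> ?P. even (gr B (fst p))}" and ?O = "{p \<in> ?P. odd (gr B (fst p))}"
  have fP: "finite ?P" by (rule bars_finite[OF B])
  have PEO: "?P = ?E \<union> ?O" by auto
  have dEO: "?E \<inter> ?O = {}" by auto
  have fE: "finite ?E" "finite ?O" using fP by auto
  have cP: "card ?P = even_bars B + odd_bars B"
    unfolding even_bars_alt odd_bars_alt using card_Un_disjoint[OF fE dEO] PEO by simp
  have "(\<Sum>i<dim B. (\<lambda>g. 1::int) (gr B i)) = 1 + (\<Sum>p\<in>?P. 1 + 1)"
    by (rule bar_sum[OF B u0 uq])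
  then show "int (dim B) = 1 + 2 * (int (even_bars B) + int (odd_bars B))" using cP by simp
  have "(\<Sum>i<dim B. sg (gr B i)) = sg 0 + (\<Sum>p\<in>?P. sg (gr B (fst p)) + sg (gr B (fst p) + 1))"
    by (rule bar_sum[OF B u0 uq])
  also have "(\<Sum>p\<in>?P. sg (gr B (fst p)) + sg (gr B (fst p) + 1)) = 0"
    by (rule sum.neutral) (simp add: sg_step)
  finally show "(\<Sum>i<dim B. sg (gr B i)) = 1" by (simp add: sg_def)
  have "(\<Sum>i<dim B. wt (gr B i)) = wt 0 + (\<Sum>p\<in>?P. wt (gr B (fst p)) + wt (gr B (fst p) + 1))"
    by (rule bar_sum[OF B u0 uq])
  also have "\<dots> = (\<Sum>p\<in>?P. sg (gr B (fst p)))"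
  proof -
    have "wt 0 = 0" by (simp add: wt_def)
    moreover have "(\<Sum>p\<in>?P. wt (gr B (fst p)) + wt (gr B (fst p) + 1)) = (\<Sum>p\<in>?P. sg (gr B (fst p)))"
      by (rule sum.cong[OF refl]) (rule wt_step)
    ultimately show ?thesis by simp
  qed
  also have "\<dots> = (\<Sum>p\<in>?E. sg (gr B (fst p))) + (\<Sum>p\<in>?O. sg (gr B (fst p)))"
    by (subst PEO, rule sum.union_disjoint[OF fE dEO])
  also have "(\<Sum>p\<in>?E. sg (gr B (fst p))) = (\<Sum>p\<in>?E. 1)" by (rule sum.cong) (auto simp: sg_def)
  also have "(\<Sum>p\<in>?O. sg (gr B (fst p))) = (\<Sum>p\<in>?O. -1)" by (rule sum.cong) (auto simp: sg_def)
  finally show "(\<Sum>i<dim B. wt (gr B i)) = int (even_bars B) - int (odd_bars B)"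
    unfolding even_bars_alt odd_bars_alt by simp
qed

lemma bar_reduced: "is_bar_cx B \<Longrightarrow> reduced B"
  unfolding reduced_def using bar_bounds by blast

lemma tensor_reduced:
  assumes r1: "reduced B1" and r2: "reduced B2"
  shows "reduced (tensor B1 B2)"
  unfolding reduced_def
proof (intro allI impI)
  fix p q assume ne: "dd (tensor B1 B2) p q \<noteq> 0"
  let ?n2 = "dim B2"
  have e: "dd (tensor B1 B2) p q = (if p < dim B1 * ?n2 \<and> q < dim B1 * ?n2 then
               (if p mod ?n2 = q mod ?n2 then dd B1 (p div ?n2) (q div ?n2) else 0)
             + (if p div ?n2 = q div ?n2 then dd B2 (p mod ?n2) (q mod ?n2) else 0) else 0)"
    unfolding tensor_def Let_def by simp
  have "(p mod ?n2 = q mod ?n2 \<and> dd B1 (p div ?n2) (q div ?n2) \<noteq> 0) \<or>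
        (p div ?n2 = q div ?n2 \<and> dd B2 (p mod ?n2) (q mod ?n2) \<noteq> 0)"
  proof (rule ccontr)
    assume a: "\<not> ?thesis"
    have "dd (tensor B1 B2) p q = 0" unfolding e using a by auto
    with ne show False by simp
  qed
  then show "fl (tensor B1 B2) p < fl (tensor B1 B2) q"
    using r1 r2 unfolding reduced_def tensor_simps by force
qed

lemma tensor_sum:
  "(\<Sum>p<dim (tensor C1 C2). f (gr (tensor C1 C2) p)) = (\<Sum>a<dim C1. \<Sum>b<dim C2. f (gr C1 a + gr C2 b))"
  unfolding tensor_simps by (rule sum_divmod)

lemma final_arith:
  fixes d1 d2 d e1 od1 e2 od2 e od :: int
  assumes "d1 = 1 + 2 * (e1 + od1)" "d2 = 1 + 2 * (e2 + od2)" "d = 1 + 2 * (e + od)"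
    "d = d1 * d2" "e - od = (e1 - od1) + (e2 - od2)"
  shows "4 * e = 4 * e1 + 4 * e2 + (d1 - 1) * (d2 - 1)"
    and "4 * od = 4 * od1 + 4 * od2 + (d1 - 1) * (d2 - 1)"
  using assms by algebra+

theorem mainTheorem5:
  fixes CFK :: "'k \<Rightarrow> cx" and csum :: "'k \<Rightarrow> 'k \<Rightarrow> 'k"
  assumes cfk: "\<And>K. is_cx (CFK K) \<and> hom_one_in_zero (CFK K)"
    and kunneth: "\<And>K1 K2. fequiv (CFK (csum K1 K2)) (tensor (CFK K1) (CFK K2))"
  shows "\<forall>K1 K2 B1 B2 B. bar_rep B1 (CFK K1) \<and> bar_rep B2 (CFK K2)
            \<and> bar_rep B (CFK (csum K1 K2)) \<longrightarrow>
           dim B = dim B1 * dim B2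
         \<and> 4 * int (even_bars B) = 4 * int (even_bars B1) + 4 * int (even_bars B2)
              + (int (dim B1) - 1) * (int (dim B2) - 1)
         \<and> 4 * int (odd_bars B) = 4 * int (odd_bars B1) + 4 * int (odd_bars B2)
              + (int (dim B1) - 1) * (int (dim B2) - 1)"
proof (intro allI impI)
  fix K1 K2 B1 B2 B
  assume a: "bar_rep B1 (CFK K1) \<and> bar_rep B2 (CFK K2) \<and> bar_rep B (CFK (csum K1 K2))"
  have b1: "is_bar_cx B1" and q1: "fequiv (CFK K1) B1" using a unfolding bar_rep_def by blast+
  have b2: "is_bar_cx B2" and q2: "fequiv (CFK K2) B2" using a unfolding bar_rep_def by blast+
  have b: "is_bar_cx B" and q: "fequiv (CFK (csum K1 K2)) B" using a unfolding bar_rep_def by blast+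
  obtain u1 where u1: "unp B1 u1" "gr B1 u1 = 0" "\<And>u. unp B1 u \<Longrightarrow> u = u1"
    using bar_unp_unique[OF b1 q1] cfk by blast
  obtain u2 where u2: "unp B2 u2" "gr B2 u2 = 0" "\<And>u. unp B2 u \<Longrightarrow> u = u2"
    using bar_unp_unique[OF b2 q2] cfk by blast
  obtain u where u: "unp B u" "gr B u = 0" "\<And>u'. unp B u' \<Longrightarrow> u' = u"
    using bar_unp_unique[OF b q] cfk by blast
  note f1 = bar_facts[OF b1 u1] and f2 = bar_facts[OF b2 u2] and f = bar_facts[OF b u]
  let ?T = "tensor B1 B2"
  have "fequiv B ?T"
  proof -
    have "fequiv B (CFK (csum K1 K2))" by (rule fequiv_sym[OF q])
    moreover have "fequiv (CFK (csum K1 K2)) (tensor (CFK K1) (CFK K2))" by (rule kunneth)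
    moreover have "fequiv (tensor (CFK K1) (CFK K2)) (tensor B1 (CFK K2))"
      by (rule tensor_fequiv_left[OF q1]) (use cfk in blast)
    moreover have "fequiv (tensor B1 (CFK K2)) (tensor B1 B2)"
      by (rule tensor_fequiv_right[OF q2 bar_cx[OF b1]])
    ultimately show ?thesis by (meson fequiv_trans)
  qed
  then have cnt: "\<And>k. card {i. i < dim B \<and> gr B i = k} = card {i. i < dim ?T \<and> gr ?T i = k}"
    by (rule count_eq) (auto intro: bar_reduced tensor_reduced b b1 b2)
  have tr: "(\<Sum>i<dim B. g (gr B i)) = (\<Sum>a<dim B1. \<Sum>b<dim B2. g (gr B1 a + gr B2 b))" for g :: "int \<Rightarrow> int"
    unfolding tensor_sum[symmetric] by (rule sum_count_transfer[OF cnt])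
  have dB: "dim B = dim B1 * dim B2"
  proof -
    have "(\<Sum>i<dim B. (\<lambda>g. 1::int) (gr B i)) = (\<Sum>a<dim B1. \<Sum>b<dim B2. (\<lambda>g. 1::int) (gr B1 a + gr B2 b))"
      by (rule tr)
    then have "int (dim B) = int (dim B1) * int (dim B2)" by simp
    then show ?thesis by (simp only: of_nat_mult[symmetric] of_nat_eq_iff)
  qed
  have W: "(\<Sum>i<dim B. wt (gr B i)) = (\<Sum>i<dim B1. wt (gr B1 i)) + (\<Sum>i<dim B2. wt (gr B2 i))"
  proof -
    have "(\<Sum>i<dim B. wt (gr B i)) = (\<Sum>a<dim B1. \<Sum>b<dim B2. wt (gr B1 a) * sg (gr B2 b) + sg (gr B1 a) * wt (gr B2 b))"
      unfolding tr wt_add ..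
    also have "\<dots> = (\<Sum>a<dim B1. wt (gr B1 a)) * (\<Sum>b<dim B2. sg (gr B2 b)) + (\<Sum>a<dim B1. sg (gr B1 a)) * (\<Sum>b<dim B2. wt (gr B2 b))"
      by (simp add: sum.distrib sum_product)
    finally show ?thesis using f1(2) f2(2) by simp
  qed
  have "4 * int (even_bars B) = 4 * int (even_bars B1) + 4 * int (even_bars B2) + (int (dim B1) - 1) * (int (dim B2) - 1)"
   and "4 * int (odd_bars B) = 4 * int (odd_bars B1) + 4 * int (odd_bars B2) + (int (dim B1) - 1) * (int (dim B2) - 1)"
    using final_arith[OF f1(1) f2(1) f(1)] dB W f(3) f1(3) f2(3) by simp_all
  with dB show "dim B = dim B1 * dim B2
         \<and> 4 * int (even_bars B) = 4 * int (even_bars B1) + 4 * int (even_bars B2)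
              + (int (dim B1) - 1) * (int (dim B2) - 1)
         \<and> 4 * int (odd_bars B) = 4 * int (odd_bars B1) + 4 * int (odd_bars B2)
              + (int (dim B1) - 1) * (int (dim B2) - 1)" by blast
qed

end
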